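(* Consider the adaptive learning forward guidance model below, for any integer $T\ge1$ and any $\bar i<0$. Then $x_0$ and $\pi_0$ do not depend on $\bar i$: $\partial\pi_0/\partial\bar i=\partial x_0/\partial\bar i=0$ for every $T$. In particular, the model does not exhibit the forward guidance puzzle.
   Context: Parameters: $0<\beta<1$, $\sigma,\lambda>0$, $\psi>1$, gains $\gamma_{x,t},\gamma_{\pi,t}$. Model for $t\ge0$: $x_t=\hat E_t x_{t+1}-\sigma(i_t-\hat E_t\pi_{t+1})$, $\pi_t=\lambda x_t+\beta\hat E_t\pi_{t+1}$, $\hat E_t x_{t+1}=\gamma_{x,t}x_{t-1}+(1-\gamma_{x,t})\hat E_{t-1}x_t$, $\hat E_t\pi_{t+1}=\gamma_{\pi,t}\pi_{t-1}+(1-\gamma_{\pi,t})\hat E_{t-1}\pi_t$, with initial values $x_{-1},\pi_{-1},\hat E_{-1}x_0,\hat E_{-1}\pi_0$ given and not depending on $\bar i$. Policy: $i_t=0$ for $t=0,\dots,T-1$, $i_T=\bar i<0$, and $i_t=\psi\pi_t$ for $t>T$. Denote by $\partial/\partial i_T$ the derivative with respect to $\bar i$. The model exhibits the forward guidance puzzle if $\lim_{T\to\infty}\partial\pi_0/\partial i_T=\lim_{T\to\infty}\partial x_0/\partial i_T=-\infty$. *)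

theory Defs
  imports "HOL-Analysis.Analysis"
begin

text \<open>Time is indexed by int;
  the equations are imposed for all t \<ge> 0, values at t = -1 are initial conditions.
  ex t stands for \<open>E-hat_t x_{t+1}\<close>, ep t for \<open>E-hat_t pi_{t+1}\<close>.\<close>

definition fg_rate :: "real \<Rightarrow> nat \<Rightarrow> real \<Rightarrow> (int \<Rightarrow> real) \<Rightarrow> int \<Rightarrow> real" where
  "fg_rate \<psi> T ib p t = (if t < int T then 0 else if t = int T then ib else \<psi> * p t)"

definition afg_model ::
  "real \<Rightarrow> real \<Rightarrow> real \<Rightarrow> real \<Rightarrow> (int \<Rightarrow> real) \<Rightarrow> (int \<Rightarrow> real) \<Rightarrow> nat \<Rightarrow> real
   \<Rightarrow> (int \<Rightarrow> real) \<Rightarrow> (int \<Rightarrow> real) \<Rightarrow> (int \<Rightarrow> real) \<Rightarrow> (int \<Rightarrow> real) \<Rightarrow> bool" where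
  "afg_model \<beta> \<sigma> lam \<psi> gx gp T ib x p ex ep \<longleftrightarrow>
     (\<forall>t::int. t \<ge> 0 \<longrightarrow>
        x t = ex t - \<sigma> * (fg_rate \<psi> T ib p t - ep t) \<and>
        p t = lam * x t + \<beta> * ep t \<and>
        ex t = gx t * x (t - 1) + (1 - gx t) * ex (t - 1) \<and>
        ep t = gp t * p (t - 1) + (1 - gp t) * ep (t - 1))"

definition fg_puzzle :: "(nat \<Rightarrow> real \<Rightarrow> int \<Rightarrow> real) \<Rightarrow> (nat \<Rightarrow> real \<Rightarrow> int \<Rightarrow> real) \<Rightarrow> real \<Rightarrow> bool" where
  "fg_puzzle x p ib \<longleftrightarrow>
     filterlim (\<lambda>T. deriv (\<lambda>b. p T b 0) ib) at_bot sequentially \<and>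
     filterlim (\<lambda>T. deriv (\<lambda>b. x T b 0) ib) at_bot sequentially"

end

theory Submission
  imports Defs
begin

theorem proposition10:
  fixes \<beta> \<sigma> lam \<psi> xm1 pm1 Exm1 Epm1 :: real
    and gx gp :: "int \<Rightarrow> real"
    and x p ex ep :: "nat \<Rightarrow> real \<Rightarrow> int \<Rightarrow> real"
  assumes "0 < \<beta>" "\<beta> < 1" "\<sigma> > 0" "lam > 0" "\<psi> > 1"
    and model: "\<And>T ib. T \<ge> 1 \<Longrightarrow> ib < 0 \<Longrightarrow>
                  afg_model \<beta> \<sigma> lam \<psi> gx gp T ib (x T ib) (p T ib) (ex T ib) (ep T ib)"
    and init: "\<And>T ib. T \<ge> 1 \<Longrightarrow> ib < 0 \<Longrightarrow>
                  x T ib (-1) = xm1 \<and> p T ib (-1) = pm1 \<and> ex T ib (-1) = Exm1 \<and> ep T ib (-1) = Epm1"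
  shows "(\<forall>T\<ge>1. \<forall>ib<0. ((\<lambda>b. p T b 0) has_real_derivative 0) (at ib)
                      \<and> ((\<lambda>b. x T b 0) has_real_derivative 0) (at ib))
         \<and> (\<forall>ib<0. \<not> fg_puzzle x p ib)"
proof -
  define E1 where "E1 = gx 0 * xm1 + (1 - gx 0) * Exm1"
  define E2 where "E2 = gp 0 * pm1 + (1 - gp 0) * Epm1"
  define X0 where "X0 = E1 + \<sigma> * E2"
  define P0 where "P0 = lam * X0 + \<beta> * E2"
  have vals: "x T b 0 = X0 \<and> p T b 0 = P0" if "T \<ge> 1" "b < 0" for T b
  proof -
    have m: "afg_model \<beta> \<sigma> lam \<psi> gx gp T b (x T b) (p T b) (ex T b) (ep T b)"
      using model that by blast
    have i: "x T b (-1) = xm1 \<and> p T b (-1) = pm1 \<and> ex T b (-1) = Exm1 \<and> ep T b (-1) = Epm1"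
      using init that by blast
    have r: "fg_rate \<psi> T b (p T b) 0 = 0" using that by (simp add: fg_rate_def)
    from m have "x T b 0 = ex T b 0 - \<sigma> * (fg_rate \<psi> T b (p T b) 0 - ep T b 0) \<and>
        p T b 0 = lam * x T b 0 + \<beta> * ep T b 0 \<and>
        ex T b 0 = gx 0 * x T b (0 - 1) + (1 - gx 0) * ex T b (0 - 1) \<and>
        ep T b 0 = gp 0 * p T b (0 - 1) + (1 - gp 0) * ep T b (0 - 1)"
      unfolding afg_model_def by blast
    then show ?thesis using i r by (simp add: X0_def P0_def E1_def E2_def)
  qed
  have D: "((\<lambda>b. p T b 0) has_real_derivative 0) (at ib)
         \<and> ((\<lambda>b. x T b 0) has_real_derivative 0) (at ib)" if "T \<ge> 1" "ib < 0" for T ib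
  proof
    show "((\<lambda>b. p T b 0) has_real_derivative 0) (at ib)"
      by (rule has_field_derivative_transform_within_open[where f="\<lambda>_. P0" and S="{..<0}"])
         (use that vals in auto)
    show "((\<lambda>b. x T b 0) has_real_derivative 0) (at ib)"
      by (rule has_field_derivative_transform_within_open[where f="\<lambda>_. X0" and S="{..<0}"])
         (use that vals in auto)
  qed
  have NP: "\<not> fg_puzzle x p ib" if "ib < 0" for ib
  proof
    assume "fg_puzzle x p ib"
    then have f: "filterlim (\<lambda>T. deriv (\<lambda>b. p T b 0) ib) at_bot sequentially"
      by (simp add: fg_puzzle_def)
    have "eventually (\<lambda>T. deriv (\<lambda>b. p T b 0) ib \<le> -1) sequentially"
      using f by (simp add: filterlim_at_bot)
    moreover have "eventually (\<lambda>T. deriv (\<lambda>b. p T b 0) ib = 0) sequentially"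
      using eventually_ge_at_top[of "1::nat"]
      by eventually_elim (use D[OF _ that] DERIV_imp_deriv in blast)
    ultimately have "eventually (\<lambda>T. False) sequentially"
      by eventually_elim simp
    then show False by simp
  qed
  show ?thesis using D NP by blast
qed

end
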